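(* There exists an absolute constant $C$ such that the following holds. Let $\lambda_1\ge\lambda_2\ge\dots\ge\lambda_d>0$, and for $t\in\mathbb R^d$ let $\|t\|_{SLOPE}=\sum_{j=1}^d\lambda_jt_j^*$, where $t_1^*\ge\dots\ge t_d^*\ge0$ is the non-increasing rearrangement of $(|t_i|)_{i=1}^d$. Let $\mathcal B=\{t\in\mathbb R^d:\|t\|_{SLOPE}\le1\}$ and $M=\max_{1\le j\le d}\lambda_j^{-1}\sqrt{\log(ed/j)}$. Then $\ell^*(\mathcal B)\le CM$.
   Context: $\ell^*(\mathcal B)=\mathbb E\sup_{t\in\mathcal B}\langle G,t\rangle$ with $G$ a standard Gaussian vector in $\mathbb R^d$. *)

theory Defs
  imports "HOL-Probability.Probability"
begin

text \<open>Vectors in R^d are functions nat => real, with coordinates indexed by 1..d.\<close>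

definition rearr :: "nat \<Rightarrow> (nat \<Rightarrow> real) \<Rightarrow> nat \<Rightarrow> real" where
  "rearr d t j = rev (sort (map (\<lambda>i. \<bar>t i\<bar>) [1..<Suc d])) ! (j - 1)"

definition slope_norm :: "nat \<Rightarrow> (nat \<Rightarrow> real) \<Rightarrow> (nat \<Rightarrow> real) \<Rightarrow> real" where
  "slope_norm d lam t = (\<Sum>j=1..d. lam j * rearr d t j)"

definition slope_ball :: "nat \<Rightarrow> (nat \<Rightarrow> real) \<Rightarrow> (nat \<Rightarrow> real) set" where
  "slope_ball d lam = {t \<in> PiE {1..d} (\<lambda>_. UNIV). slope_norm d lam t \<le> 1}"

definition gauss :: "nat \<Rightarrow> (nat \<Rightarrow> real) measure" where
  "gauss d = PiM {1..d} (\<lambda>_. density lborel std_normal_density)"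

text \<open>Gaussian mean width ell^*(B) = E sup_{t in B} <G,t>, as a nonnegative integral
  (the supremum is nonnegative whenever 0 is in B).\<close>
definition ell_star :: "nat \<Rightarrow> (nat \<Rightarrow> real) set \<Rightarrow> ennreal" where
  "ell_star d B = (\<integral>\<^sup>+ g. (SUP t\<in>B. ennreal (\<Sum>i=1..d. g i * t i)) \<partial>gauss d)"

definition slope_M :: "nat \<Rightarrow> (nat \<Rightarrow> real) \<Rightarrow> real" where
  "slope_M d lam = Max ((\<lambda>j. sqrt (ln (exp 1 * real d / real j)) / lam j) ` {1..d})"

end

theory Submission imports Defs "HOL-Combinatorics.Permutations" begin


lemma gauss1: "(\<integral>\<^sup>+ x. ennreal (exp (x\<^sup>2/4)) \<partial>density lborel std_normal_density) = ennreal (sqrt 2)"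
proof -
  have eq: "std_normal_density x * exp (x\<^sup>2/4) = sqrt 2 * normal_density 0 (sqrt 2) x" for x
  proof -
    have "exp (- x\<^sup>2 / 2) * exp (x\<^sup>2/4) = exp (-x\<^sup>2/4)" by (simp flip: exp_add)
    moreover have "sqrt (2*pi*(sqrt 2)\<^sup>2) = sqrt 2 * sqrt (2*pi)"
      by (simp add: real_sqrt_mult)
    ultimately show ?thesis unfolding std_normal_density_def normal_density_def
      by (simp add: field_simps)
  qed
  have "(\<integral>\<^sup>+ x. ennreal (exp (x\<^sup>2/4)) \<partial>density lborel std_normal_density)
      = (\<integral>\<^sup>+ x. ennreal (std_normal_density x) * ennreal (exp (x\<^sup>2/4)) \<partial>lborel)"
    by (subst nn_integral_density) auto
  also have "\<dots> = (\<integral>\<^sup>+ x. ennreal (sqrt 2) * ennreal (normal_density 0 (sqrt 2) x) \<partial>lborel)"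
    by (intro nn_integral_cong) (simp add: eq flip: ennreal_mult')
  also have "\<dots> = ennreal (sqrt 2) * (\<integral>\<^sup>+ x. ennreal (normal_density 0 (sqrt 2) x) \<partial>lborel)"
    by (subst nn_integral_cmult) auto
  also have "(\<integral>\<^sup>+ x. ennreal (normal_density 0 (sqrt 2) x) \<partial>lborel) = 1"
    by (subst nn_integral_eq_integral) auto
  finally show ?thesis by simp
qed

lemma gauss_comp: assumes "i \<in> {1..d}"
  shows "(\<integral>\<^sup>+ g. ennreal (exp ((g i)\<^sup>2/4)) \<partial>gauss d) = ennreal (sqrt 2)"
proof -
  have ps: "prob_space (density lborel std_normal_density)"
    using prob_space_normal_density[of 1 0] by simp
  have "(\<integral>\<^sup>+ g. ennreal (exp ((g i)\<^sup>2/4)) \<partial>gauss d)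
     = (\<integral>\<^sup>+ x. ennreal (exp (x\<^sup>2/4)) \<partial>distr (gauss d) (density lborel std_normal_density) (\<lambda>\<omega>. \<omega> i))"
    unfolding gauss_def
    using measurable_component_singleton[OF assms, of "\<lambda>_. density lborel std_normal_density"]
    by (subst nn_integral_distr) auto
  also have "distr (gauss d) (density lborel std_normal_density) (\<lambda>\<omega>. \<omega> i) = density lborel std_normal_density"
    unfolding gauss_def by (rule distr_PiM_component[OF ps assms])
  finally show ?thesis using gauss1 by simp
qed



lemma rearr_perm:
  obtains \<pi> where "bij_betw \<pi> {1..d} {1..d}" "\<And>j. j \<in> {1..d} \<Longrightarrow> rearr d t j = \<bar>t (\<pi> j)\<bar>"
proof -
  define xs where "xs = map (\<lambda>i. \<bar>t i\<bar>) [1..<Suc d]"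
  define ys where "ys = rev (sort xs)"
  have len: "length ys = d" "length xs = d" by (auto simp: ys_def xs_def)
  have "mset ys = mset xs" by (simp add: ys_def)
  then obtain p where p: "p permutes {..<length xs}" "permute_list p xs = ys"
    by (metis mset_eq_permutation)
  have pd: "p permutes {..<d}" using p len by simp
  define \<pi> where "\<pi> = (\<lambda>j. Suc (p (j - 1)))"
  have b1: "bij_betw (\<lambda>j. j - 1) {1..d} {..<d}"
    by (rule bij_betw_byWitness[where f'=Suc]) auto
  have b2: "bij_betw Suc {..<d} {1..d}"
    by (rule bij_betw_byWitness[where f'="\<lambda>j. j - 1"]) auto
  have "bij_betw (Suc \<circ> (p \<circ> (\<lambda>j. j - 1))) {1..d} {1..d}"
    by (rule bij_betw_trans[OF bij_betw_trans[OF b1 permutes_imp_bij[OF pd]] b2])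
  hence "bij_betw \<pi> {1..d} {1..d}" by (simp add: \<pi>_def o_def)
  moreover have "rearr d t j = \<bar>t (\<pi> j)\<bar>" if "j \<in> {1..d}" for j
  proof -
    have jl: "j - 1 < d" using that by auto
    have "p (j-1) < d" using permutes_in_image[OF pd, of "j-1"] jl by simp
    hence "rearr d t j = xs ! (p (j - 1))"
      unfolding rearr_def using p jl len
      by (metis xs_def ys_def permute_list_nth)
    also have "\<dots> = \<bar>t (\<pi> j)\<bar>" using \<open>p (j-1) < d\<close> by (simp add: xs_def \<pi>_def del: upt_Suc)
    finally show ?thesis .
  qed
  ultimately show ?thesis using that by blast
qed

lemma rearr_nonneg: "j \<in> {1..d} \<Longrightarrow> 0 \<le> rearr d t j"
  by (metis abs_ge_zero rearr_perm)

lemma rearr_mono: assumes "1 \<le> a" "a \<le> b" "b \<le> d" shows "rearr d t b \<le> rearr d t a"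
proof -
  define xs where "xs = map (\<lambda>i. \<bar>t i\<bar>) [1..<Suc d]"
  have len: "length (sort xs) = d" by (simp add: xs_def)
  have "sort xs ! (d - Suc (b - 1)) \<le> sort xs ! (d - Suc (a - 1))"
    by (rule sorted_nth_mono) (use assms len in auto)
  thus ?thesis unfolding rearr_def using assms len by (simp add: rev_nth xs_def)
qed



lemma key_ineq:
  fixes x L :: real assumes x: "0 \<le> x" and L: "1 \<le> L"
  shows "x \<le> 2 * sqrt L + 2 * sqrt L * exp (-L) * exp (x\<^sup>2/4)"
proof (cases "x \<le> 2 * sqrt L")
  case True
  have "0 \<le> 2 * sqrt L * exp (-L) * exp (x\<^sup>2/4)" using L by simp
  thus ?thesis using True by linarith
next
  case False
  have sL: "sqrt L > 0" "sqrt L ^ 2 = L" using L by auto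
  have x2: "x\<^sup>2 \<ge> 4 * L"
  proof -
    have "(2 * sqrt L)\<^sup>2 \<le> x\<^sup>2" using False sL by (intro power_mono) auto
    thus ?thesis using sL by (simp add: power_mult_distrib)
  qed
  have r: "x\<^sup>2/(4*L) - 1 \<ge> 0" using x2 L by (simp add: field_simps)
  have "L * (x\<^sup>2/(4*L) - 1) \<ge> 1 * (x\<^sup>2/(4*L) - 1)"
    by (rule mult_right_mono[OF L r])
  moreover have "L * (x\<^sup>2/(4*L) - 1) = x\<^sup>2/4 - L" using L by (simp add: field_simps)
  ultimately have "x\<^sup>2/4 - L \<ge> x\<^sup>2/(4*L) - 1" by (simp only: mult_1)
  hence "exp (x\<^sup>2/4 - L) \<ge> x\<^sup>2/(4*L)"
    using exp_ge_add_one_self[of "x\<^sup>2/4 - L"] by linarith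
  hence e: "exp (-L) * exp (x\<^sup>2/4) \<ge> x\<^sup>2/(4*L)" by (simp add: mult_exp_exp)
  have "x \<le> x * (x / (2 * sqrt L))" using False sL x by (simp add: field_simps mult_left_mono)
  also have "\<dots> = 2 * sqrt L * (x\<^sup>2/(4*L))" using sL
    by (simp add: field_simps power2_eq_square)
  also have "\<dots> \<le> 2 * sqrt L * (exp (-L) * exp (x\<^sup>2/4))"
    using e sL by (intro mult_left_mono) auto
  finally have h: "x \<le> 2 * sqrt L * (exp (-L) * exp (x\<^sup>2/4))" .
  have "0 \<le> 2 * sqrt L" using sL by simp
  with h show ?thesis by (simp only: mult.assoc)
qed

lemma lam_mono: fixes lam :: "nat \<Rightarrow> real" assumes "\<forall>j\<in>{1..<d}. lam (Suc j) \<le> lam j" "1 \<le> a" "a \<le> b" "b \<le> d"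
  shows "lam b \<le> lam a"
  using assms(3,4)
proof (induction b rule: dec_induct)
  case base show ?case by (rule order.refl)
next
  case (step n)
  have "lam (Suc n) \<le> lam n" using assms(1,2) step by auto
  with step show ?case by simp
qed



lemma det_bound:
  fixes lam g t :: "nat \<Rightarrow> real"
  assumes d: "d \<ge> 1" and mono: "\<forall>j\<in>{1..<d}. lam (Suc j) \<le> lam j"
    and pos: "\<forall>j\<in>{1..d}. lam j > 0" and tn: "slope_norm d lam t \<le> 1"
  shows "(\<Sum>i=1..d. g i * t i) \<le> 2 * slope_M d lam + 2 * slope_M d lam / (exp 1 * d) * (\<Sum>i=1..d. exp ((g i)\<^sup>2/4))"
proof -
  define M where "M = slope_M d lam"
  obtain \<pi> where pi: "bij_betw \<pi> {1..d} {1..d}" "\<And>j. j\<in>{1..d} \<Longrightarrow> rearr d t j = \<bar>t (\<pi> j)\<bar>"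
    using rearr_perm by blast
  define r where "r j = rearr d t j" for j
  define L where "L j = ln (exp 1 * d / j)" for j :: nat
  define \<psi> where "\<psi> i = exp ((g i)\<^sup>2/4)" for i
  define c where "c = 2 * M / (exp 1 * d)"
  have L1: "1 \<le> L j" if "j \<in> {1..d}" for j
  proof -
    have "real j \<le> real d" "real j > 0" using that by auto
    hence "exp 1 \<le> exp 1 * d / j" by (simp add: field_simps)
    moreover have p: "0 < exp 1 * d / j" using that by auto
    ultimately have "ln (exp 1) \<le> ln (exp 1 * d / j)" by (subst ln_le_cancel_iff) auto
    thus ?thesis by (simp add: L_def)
  qed
  have expL: "exp (- L j) = j / (exp 1 * d)" if "j \<in> {1..d}" for j
  proof -
    have "exp 1 * d / j > 0" using that by auto
    thus ?thesis by (simp add: L_def exp_minus)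
  qed
  have fin: "finite ((\<lambda>j. sqrt (ln (exp 1 * real d / real j)) / lam j) ` {1..d})" by simp
  have sqL: "sqrt (L j) \<le> M * lam j" if "j \<in> {1..d}" for j
  proof -
    have "sqrt (L j) / lam j \<le> M"
      unfolding M_def slope_M_def L_def by (rule Max_ge[OF fin]) (use that in auto)
    thus ?thesis using pos that by (simp add: pos_divide_le_eq)
  qed
  have M0: "0 \<le> M"
  proof -
    have a: "0 \<le> sqrt (L 1)" using L1[of 1] d by auto
    have b: "sqrt (L 1) \<le> M * lam 1" using sqL[of 1] d by auto
    have l1: "lam 1 > 0" using pos d by auto
    have "0 \<le> M * lam 1" using a b by linarith
    thus ?thesis using l1 by (simp add: zero_le_mult_iff)
  qed
  have r0: "0 \<le> r j" if "j \<in> {1..d}" for j using pi(2)[OF that] by (simp add: r_def)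
  have jb: "j * (lam j * r j) \<le> 1" if j: "j \<in> {1..d}" for j
  proof -
    have "j * (lam j * r j) = (\<Sum>i=1..j. lam j * r j)" by simp
    also have "\<dots> \<le> (\<Sum>i=1..j. lam i * r i)"
    proof (rule sum_mono)
      fix i assume i: "i \<in> {1..j}"
      have "lam j \<le> lam i" using lam_mono[OF mono, of i j] i j by auto
      moreover have "r j \<le> r i" unfolding r_def using rearr_mono[of i j d t] i j by auto
      moreover have "0 \<le> r j" using r0 j by auto
      moreover have "0 \<le> lam i" using pos i j by (metis atLeastAtMost_iff le_trans less_imp_le)
      ultimately show "lam j * r j \<le> lam i * r i" by (intro mult_mono) auto
    qed
    also have "\<dots> \<le> (\<Sum>i=1..d. lam i * r i)"
    proof (rule sum_mono2)
      fix b assume "b \<in> {1..d} - {1..j}"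
      hence b: "b \<in> {1..d}" by auto
      show "0 \<le> lam b * r b" using pos b r0[OF b] by (simp add: less_imp_le)
    qed (use j in auto)
    also have "\<dots> \<le> 1" using tn by (simp add: slope_norm_def r_def)
    finally show ?thesis .
  qed
  have "(\<Sum>i=1..d. g i * t i) \<le> (\<Sum>i=1..d. \<bar>g i\<bar> * \<bar>t i\<bar>)"
    by (rule sum_mono) (metis abs_ge_self abs_mult)
  also have "\<dots> = (\<Sum>j=1..d. \<bar>g (\<pi> j)\<bar> * \<bar>t (\<pi> j)\<bar>)"
    using sum.reindex_bij_betw[OF pi(1), of "\<lambda>i. \<bar>g i\<bar> * \<bar>t i\<bar>"] by simp
  also have "\<dots> = (\<Sum>j=1..d. \<bar>g (\<pi> j)\<bar> * r j)"
    by (rule sum.cong) (auto simp: r_def pi(2))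
  also have "\<dots> \<le> (\<Sum>j=1..d. 2 * M * (lam j * r j) + c * \<psi> (\<pi> j))"
  proof (rule sum_mono)
    fix j assume j: "j \<in> {1..d}"
    have k: "\<bar>g (\<pi> j)\<bar> \<le> 2 * sqrt (L j) + 2 * sqrt (L j) * exp (- L j) * \<psi> (\<pi> j)"
      using key_ineq[OF abs_ge_zero L1[OF j], of "g (\<pi> j)"] by (simp add: \<psi>_def)
    have "\<bar>g (\<pi> j)\<bar> * r j \<le> (2 * sqrt (L j) + 2 * sqrt (L j) * exp (- L j) * \<psi> (\<pi> j)) * r j"
      by (rule mult_right_mono[OF k r0[OF j]])
    also have "\<dots> = 2 * sqrt (L j) * r j + 2 * (sqrt (L j) * r j * j) * \<psi> (\<pi> j) / (exp 1 * d)"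
      using expL[OF j] by (simp add: algebra_simps)
    also have "\<dots> \<le> 2 * M * (lam j * r j) + c * \<psi> (\<pi> j)"
    proof -
      have a: "sqrt (L j) * r j \<le> M * lam j * r j"
        by (rule mult_right_mono[OF sqL[OF j] r0[OF j]])
      have "sqrt (L j) * r j * j \<le> M * lam j * r j * j"
        by (rule mult_right_mono[OF a]) simp
      also have "\<dots> = M * (j * (lam j * r j))" by (simp add: algebra_simps)
      also have "\<dots> \<le> M * 1" by (rule mult_left_mono[OF jb[OF j] M0])
      finally have b: "sqrt (L j) * r j * j \<le> M" by simp
      have "2 * (sqrt (L j) * r j * j) * \<psi> (\<pi> j) / (exp 1 * d) \<le> 2 * M * \<psi> (\<pi> j) / (exp 1 * d)"
        using b by (intro divide_right_mono mult_right_mono) (auto simp: \<psi>_def)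
      also have "\<dots> = c * \<psi> (\<pi> j)" by (simp add: c_def)
      finally show ?thesis using a by (simp add: algebra_simps)
    qed
    finally show "\<bar>g (\<pi> j)\<bar> * r j \<le> 2 * M * (lam j * r j) + c * \<psi> (\<pi> j)" .
  qed
  also have "\<dots> = 2 * M * (\<Sum>j=1..d. lam j * r j) + c * (\<Sum>j=1..d. \<psi> (\<pi> j))"
    by (simp add: sum.distrib sum_distrib_left)
  also have "(\<Sum>j=1..d. \<psi> (\<pi> j)) = (\<Sum>i=1..d. \<psi> i)"
    using sum.reindex_bij_betw[OF pi(1), of \<psi>] by simp
  also have "(\<Sum>j=1..d. lam j * r j) = slope_norm d lam t" by (simp add: slope_norm_def r_def)
  also have "2 * M * slope_norm d lam t \<le> 2 * M * 1"
    using tn M0 by (intro mult_left_mono) auto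
  finally show ?thesis by (simp add: M_def c_def \<psi>_def)
qed



lemma gauss_prob: "prob_space (gauss d)"
  unfolding gauss_def by (rule prob_space_PiM) (use prob_space_normal_density[of 1 0] in simp)

lemma meas_comp: assumes i: "i \<in> {1..d}"
  shows "(\<lambda>g. ennreal (exp ((g i)\<^sup>2/4))) \<in> borel_measurable (gauss d)"
proof -
  have "(\<lambda>g. g i) \<in> measurable (gauss d) (density lborel std_normal_density)"
    unfolding gauss_def by (rule measurable_component_singleton[OF i])
  hence h: "(\<lambda>g. g i) \<in> borel_measurable (gauss d)" by simp
  have "(\<lambda>x::real. ennreal (exp (x\<^sup>2/4))) \<in> borel_measurable borel" by measurable
  from measurable_compose[OF h this] show ?thesis by simp
qed

lemma M_nonneg: assumes d: "d \<ge> 1" and pos: "\<forall>j\<in>{1..d}. lam j > 0"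
  shows "0 \<le> slope_M d lam"
proof -
  have fin: "finite ((\<lambda>j. sqrt (ln (exp 1 * real d / real j)) / lam j) ` {1..d})" by simp
  have "sqrt (ln (exp 1 * real d / real 1)) / lam 1 \<le> slope_M d lam"
    unfolding slope_M_def by (rule Max_ge[OF fin], rule rev_image_eqI[of 1]) (use d in auto)
  moreover have "0 \<le> sqrt (ln (exp 1 * real d / real 1)) / lam 1"
  proof -
    have e1: "(1::real) \<le> exp 1" by simp
    have d1: "1 \<le> real d" using d by simp
    have "1 \<le> exp 1 * real d" using mult_mono[OF e1 d1] by simp
    hence "0 \<le> ln (exp 1 * real d)" by simp
    thus ?thesis using pos d by (simp add: less_imp_le)
  qed
  ultimately show ?thesis by linarith
qed

theorem proposition5p11:
  shows "\<exists>C::real. \<forall>(d::nat) (lam::nat \<Rightarrow> real).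
     d \<ge> 1 \<longrightarrow> (\<forall>j\<in>{1..<d}. lam (Suc j) \<le> lam j) \<longrightarrow> (\<forall>j\<in>{1..d}. lam j > 0) \<longrightarrow>
     ell_star d (slope_ball d lam) \<le> ennreal (C * slope_M d lam)"
proof (intro exI[of _ 4] allI impI)
  fix d :: nat and lam :: "nat \<Rightarrow> real"
  assume d: "d \<ge> 1" and mono: "\<forall>j\<in>{1..<d}. lam (Suc j) \<le> lam j" and pos: "\<forall>j\<in>{1..d}. lam j > 0"
  define M where "M = slope_M d lam"
  define c where "c = 2 * M / (exp 1 * d)"
  have M0: "0 \<le> M" using M_nonneg[OF d pos] by (simp add: M_def)
  have c0: "0 \<le> c" using M0 by (simp add: c_def)
  interpret P: prob_space "gauss d" by (rule gauss_prob)
  have "ell_star d (slope_ball d lam)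
      \<le> (\<integral>\<^sup>+ g. ennreal (2 * M + c * (\<Sum>i=1..d. exp ((g i)\<^sup>2/4))) \<partial>gauss d)"
    unfolding ell_star_def
  proof (rule nn_integral_mono, rule SUP_least)
    fix g t assume "t \<in> slope_ball d lam"
    hence tn: "slope_norm d lam t \<le> 1" by (simp add: slope_ball_def)
    show "ennreal (\<Sum>i=1..d. g i * t i) \<le> ennreal (2 * M + c * (\<Sum>i=1..d. exp ((g i)\<^sup>2/4)))"
      using det_bound[OF d mono pos tn, of g] by (intro ennreal_leI) (simp add: M_def c_def)
  qed
  also have "\<dots> = (\<integral>\<^sup>+ g. ennreal (2 * M) + (\<Sum>i\<in>{1..d}. ennreal c * ennreal (exp ((g i)\<^sup>2/4))) \<partial>gauss d)"
  proof (rule nn_integral_cong)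
    fix g
    have "(\<Sum>i\<in>{1..d}. ennreal c * ennreal (exp ((g i)\<^sup>2/4))) = ennreal (c * (\<Sum>i=1..d. exp ((g i)\<^sup>2/4)))"
    proof -
      have "(\<Sum>i\<in>{1..d}. ennreal c * ennreal (exp ((g i)\<^sup>2/4))) = (\<Sum>i\<in>{1..d}. ennreal (c * exp ((g i)\<^sup>2/4)))"
        by (rule sum.cong[OF refl], rule ennreal_mult[symmetric, OF c0 exp_ge_zero])
      also have "\<dots> = ennreal (\<Sum>i\<in>{1..d}. c * exp ((g i)\<^sup>2/4))"
        by (rule sum_ennreal) (use c0 in simp)
      finally show ?thesis by (simp only: sum_distrib_left)
    qed
    show "ennreal (2 * M + c * (\<Sum>i=1..d. exp ((g i)\<^sup>2/4))) = ennreal (2 * M) + (\<Sum>i\<in>{1..d}. ennreal c * ennreal (exp ((g i)\<^sup>2/4)))"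
      unfolding \<open>_ = ennreal (c * (\<Sum>i=1..d. exp ((g i)\<^sup>2/4)))\<close>
      by (rule ennreal_plus) (use M0 c0 in \<open>auto intro!: sum_nonneg mult_nonneg_nonneg\<close>)
  qed
  also have "\<dots> = ennreal (2 * M) + (\<Sum>i\<in>{1..d}. ennreal c * (\<integral>\<^sup>+ g. ennreal (exp ((g i)\<^sup>2/4)) \<partial>gauss d))"
  proof -
    have mi: "(\<lambda>g. ennreal c * ennreal (exp ((g i)\<^sup>2/4))) \<in> borel_measurable (gauss d)" if "i \<in> {1..d}" for i
      by (rule borel_measurable_times_ennreal[OF borel_measurable_const meas_comp[OF that]])
    have ms: "(\<lambda>g. \<Sum>i\<in>{1..d}. ennreal c * ennreal (exp ((g i)\<^sup>2/4))) \<in> borel_measurable (gauss d)"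
      by (rule borel_measurable_sum) (rule mi)
    have "(\<integral>\<^sup>+ g. ennreal (2 * M) + (\<Sum>i\<in>{1..d}. ennreal c * ennreal (exp ((g i)\<^sup>2/4))) \<partial>gauss d)
        = (\<integral>\<^sup>+ g. ennreal (2 * M) \<partial>gauss d) + (\<integral>\<^sup>+ g. (\<Sum>i\<in>{1..d}. ennreal c * ennreal (exp ((g i)\<^sup>2/4))) \<partial>gauss d)"
      by (rule nn_integral_add[OF borel_measurable_const ms])
    also have "(\<integral>\<^sup>+ g. ennreal (2 * M) \<partial>gauss d) = ennreal (2 * M)"
      by (simp add: P.emeasure_space_1)
    also have "(\<integral>\<^sup>+ g. (\<Sum>i\<in>{1..d}. ennreal c * ennreal (exp ((g i)\<^sup>2/4))) \<partial>gauss d)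
        = (\<Sum>i\<in>{1..d}. (\<integral>\<^sup>+ g. ennreal c * ennreal (exp ((g i)\<^sup>2/4)) \<partial>gauss d))"
      by (rule nn_integral_sum) (rule mi)
    also have "\<dots> = (\<Sum>i\<in>{1..d}. ennreal c * (\<integral>\<^sup>+ g. ennreal (exp ((g i)\<^sup>2/4)) \<partial>gauss d))"
      by (rule sum.cong[OF refl], rule nn_integral_cmult, rule meas_comp)
    finally show ?thesis .
  qed
  also have "\<dots> = ennreal (2 * M) + (\<Sum>i\<in>{1..d}. ennreal (c * sqrt 2))"
    by (intro arg_cong2[where f="(+)"] sum.cong refl) (simp add: gauss_comp c0 ennreal_mult')
  also have "\<dots> = ennreal (2 * M + d * (c * sqrt 2))"
  proof -
    have "(\<Sum>i\<in>{1..d}. ennreal (c * sqrt 2)) = ennreal (\<Sum>i\<in>{1..d}. c * sqrt 2)"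
      by (rule sum_ennreal) (use c0 in simp)
    also have "(\<Sum>i\<in>{1..d}. c * sqrt 2) = d * (c * sqrt 2)" by simp
    finally have "(\<Sum>i\<in>{1..d}. ennreal (c * sqrt 2)) = ennreal (d * (c * sqrt 2))" .
    moreover have "ennreal (2 * M + d * (c * sqrt 2)) = ennreal (2 * M) + ennreal (d * (c * sqrt 2))"
      by (rule ennreal_plus) (use M0 c0 in auto)
    ultimately show ?thesis by simp
  qed
  also have "\<dots> \<le> ennreal (4 * M)"
  proof (rule ennreal_leI)
    have e2: "2 \<le> exp (1::real)" using exp_ge_add_one_self[of 1] by simp
    have s2: "sqrt 2 \<le> (2::real)" using real_sqrt_le_mono[of 2 4] by simp
    have "d * (c * sqrt 2) = 2 * M * (sqrt 2 / exp 1)" using d by (simp add: c_def field_simps)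
    also have "\<dots> \<le> 2 * M * 1"
      using M0 s2 e2 by (intro mult_left_mono) (auto simp: field_simps)
    finally show "2 * M + d * (c * sqrt 2) \<le> 4 * M" by simp
  qed
  finally show "ell_star d (slope_ball d lam) \<le> ennreal (4 * slope_M d lam)" by (simp add: M_def)
qed

end
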